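(* For any positive integers $n$ and $m\ge 2$ and any $\sigma_1^2,\dots,\sigma_n^2>0$, $\mathrm{Ent}(\sigma^2_{G^{r}})\le 8\ln(m)$.
   Context: For a vector $a=(a_i)_{i\in S}$ with nonnegative entries and positive sum, $\mathrm{Ent}(a)=-\sum_i\hat a_i\ln\hat a_i$ with $\hat a_i=a_i/\sum_j a_j$. For $S\subset[n]$, $\sigma^2_S=(\sigma_i^2)_{i\in S}$. Let $\underline\sigma^2=\min_i\sigma_i^2$ and for $j=1,\dots,k$ (covering $[n]$) let $G_j=\{i\in[n]:2^{j-1}\le\sigma_i^2/\underline\sigma^2<2^j\}$. For each $j$ with $|G_j|\le 2m$ set $G'_j=G_j$; for each $j$ with $|G_j|>2m$ choose $G'_j\subset G_j$ with $|G'_j|=2m$; $G^{r}=\bigcup_jG'_j$, where the choices of the $G'_j$ are made so that $\mathrm{Ent}(\sigma^2_{G^{r}})$ is maximized. *)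

theory Defs
  imports Complex_Main
begin

definition Ent :: "(nat \<Rightarrow> real) \<Rightarrow> nat set \<Rightarrow> real" where
  "Ent a S = - (\<Sum>i\<in>S. (a i / sum a S) * ln (a i / sum a S))"

text \<open>s i plays the role of sigma_i^2, indices range over {1..n}.\<close>
definition smin :: "(nat \<Rightarrow> real) \<Rightarrow> nat \<Rightarrow> real" where
  "smin s n = Min (s ` {1..n})"

definition grp :: "(nat \<Rightarrow> real) \<Rightarrow> nat \<Rightarrow> nat \<Rightarrow> nat set" where
  "grp s n j = {i \<in> {1..n}. (2::real) ^ (j - 1) \<le> s i / smin s n \<and> s i / smin s n < 2 ^ j}"

definition admissible_choice :: "(nat \<Rightarrow> real) \<Rightarrow> nat \<Rightarrow> nat \<Rightarrow> (nat \<Rightarrow> nat set) \<Rightarrow> bool" where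
  "admissible_choice s n m Gp \<longleftrightarrow>
     (\<forall>j\<ge>1. (card (grp s n j) \<le> 2 * m \<longrightarrow> Gp j = grp s n j) \<and>
             (card (grp s n j) > 2 * m \<longrightarrow> Gp j \<subseteq> grp s n j \<and> card (Gp j) = 2 * m))"

definition reduced_sets :: "(nat \<Rightarrow> real) \<Rightarrow> nat \<Rightarrow> nat \<Rightarrow> nat set set" where
  "reduced_sets s n m = {(\<Union>j\<in>{1..}. Gp j) | Gp. admissible_choice s n m Gp}"

end

theory Submission
  imports Defs
begin

lemma renyi_bound:
  fixes s :: "nat \<Rightarrow> real" and R :: "nat set"
  assumes fin: "finite R" and ne: "R \<noteq> {}" and pos: "\<forall>i\<in>R. s i > 0"
  shows "(2/3) * Ent s R \<le> ln (\<Sum>i\<in>R. root 3 (s i / sum s R))"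
proof -
  define S where "S = sum s R"
  have S: "S > 0" unfolding S_def using fin ne pos by (simp add: sum_pos)
  define p where "p i = s i / S" for i
  have ppos: "\<And>i. i \<in> R \<Longrightarrow> p i > 0" using pos S by (simp add: p_def)
  have psum: "(\<Sum>i\<in>R. p i) = 1" using S by (simp add: p_def S_def sum_divide_distrib[symmetric])
  define V where "V = (\<Sum>i\<in>R. root 3 (p i))"
  have V: "V > 0" unfolding V_def using fin ne ppos by (simp add: sum_pos real_root_gt_zero)
  define q where "q i = root 3 (p i) / V" for i
  have qsum: "(\<Sum>i\<in>R. q i) = 1" using V by (simp add: q_def V_def sum_divide_distrib[symmetric])
  have key: "p i * ln (q i / p i) \<le> q i - p i" if "i \<in> R" for i
  proof -
    have pq: "p i > 0" "q i > 0" using ppos[OF that] V by (auto simp: q_def real_root_gt_zero)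
    have "ln (q i / p i) \<le> q i / p i - 1" using pq by (intro ln_le_minus_one) auto
    hence "p i * ln (q i / p i) \<le> p i * (q i / p i - 1)" using pq by (intro mult_left_mono) auto
    also have "\<dots> = q i - p i" using pq by (simp add: field_simps)
    finally show ?thesis .
  qed
  have lnq: "ln (q i / p i) = - (2/3) * ln (p i) - ln V" if "i \<in> R" for i
  proof -
    have pq: "p i > 0" using ppos[OF that] .
    have "ln (q i / p i) = ln (root 3 (p i)) - ln V - ln (p i)"
      using pq V by (simp add: q_def ln_div ln_mult real_root_gt_zero)
    also have "\<dots> = - (2/3) * ln (p i) - ln V" using pq by (simp add: ln_root)
    finally show ?thesis .
  qed
  have "(\<Sum>i\<in>R. p i * ln (q i / p i)) \<le> (\<Sum>i\<in>R. q i - p i)"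
    using key by (rule sum_mono)
  also have "\<dots> = 0" using qsum psum by (simp add: sum_subtractf)
  finally have A: "(\<Sum>i\<in>R. p i * ln (q i / p i)) \<le> 0" .
  have "(\<Sum>i\<in>R. p i * ln (q i / p i)) = (\<Sum>i\<in>R. (2/3) * (- (p i * ln (p i))) - p i * ln V)"
    by (intro sum.cong refl) (simp add: lnq algebra_simps)
  also have "\<dots> = (2/3) * (- (\<Sum>i\<in>R. p i * ln (p i))) - ln V"
    using psum by (simp add: sum_subtractf sum_distrib_left sum_negf sum_distrib_right[symmetric])
  finally have "(2/3) * (- (\<Sum>i\<in>R. p i * ln (p i))) \<le> ln V" using A by linarith
  thus ?thesis by (simp add: Ent_def p_def S_def V_def)
qed

lemma geom_bound:
  fixes x :: real assumes "x > 1"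
  shows "(\<Sum>j\<in>{1..J}. x ^ j) \<le> x ^ (J+1) / (x - 1)"
proof -
  have "(\<Sum>j\<in>{1..J}. x ^ j) \<le> (\<Sum>j<J+1. x ^ j)"
    using assms by (intro sum_mono2) auto
  also have "\<dots> = (x ^ (J+1) - 1) / (x - 1)" using assms by (intro geometric_sum) simp
  also have "\<dots> \<le> x ^ (J+1) / (x - 1)" using assms by (simp add: divide_right_mono)
  finally show ?thesis .
qed

theorem lemma1:
  fixes s :: "nat \<Rightarrow> real" and n m :: nat and R :: "nat set"
  assumes "n \<ge> 1" and "m \<ge> 2"
    and "\<forall>i\<in>{1..n}. s i > 0"
    and "R \<in> reduced_sets s n m"
    and "\<forall>R'\<in>reduced_sets s n m. Ent s R' \<le> Ent s R"
  shows "Ent s R \<le> 8 * ln (real m)"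
proof -
  obtain Gp where RGp: "R = (\<Union>j\<in>{1..}. Gp j)" and adm: "admissible_choice s n m Gp"
    using assms(4) unfolding reduced_sets_def by blast
  define r where "r = smin s n"
  have rin: "r \<in> s ` {1..n}" unfolding r_def smin_def using assms(1) by (intro Min_in) auto
  have r: "r > 0" using rin assms(3) by auto
  have Gsub: "Gp j \<subseteq> grp s n j" and Gcard: "card (Gp j) \<le> 2 * m" if "j \<ge> 1" for j
    using adm that unfolding admissible_choice_def
    by (metis linorder_not_le order_refl)+
  have grp_bounds: "2 ^ (j - 1) * r \<le> s i \<and> s i < 2 ^ j * r \<and> i \<in> {1..n}" if "i \<in> grp s n j" for i j
    using that r unfolding grp_def r_def[symmetric] by (auto simp: field_simps)
  have Rsub: "R \<subseteq> {1..n}" using RGp Gsub grp_bounds by blast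
  have fin: "finite R" using Rsub finite_subset by blast
  have spos: "\<forall>i\<in>R. s i > 0" using Rsub assms(3) by auto
  show ?thesis
  proof (cases "R = {}")
    case True
    have "0 \<le> 8 * ln (real m)" using assms(2) by simp
    thus ?thesis using True by (simp add: Ent_def)
  next
    case ne: False
    define S where "S = sum s R"
    define M where "M = Max (s ` R)"
    have Min: "M \<in> s ` R" unfolding M_def using fin ne by (intro Max_in) auto
    have sleM: "s i \<le> M" if "i \<in> R" for i unfolding M_def using fin that by auto
    obtain i0 where i0: "i0 \<in> R" "s i0 = M" using Min by auto
    obtain J where J: "J \<ge> 1" "i0 \<in> Gp J" using i0 RGp by auto
    have MJ: "2 ^ (J - 1) * r \<le> M" "M < 2 ^ J * r" using grp_bounds[of i0 J] Gsub[OF J(1)] J i0 by auto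
    have M: "M > 0" using i0 spos by auto
    have MS: "M \<le> S" unfolding S_def using i0 fin spos
      by (metis member_le_sum order_less_imp_le DiffD1)
    have S: "S > 0" using M MS by linarith
    define x where "x = root 3 (2::real)"
    have x3: "x ^ 3 = 2" unfolding x_def by simp
    have x1: "x > 1" unfolding x_def by simp
    have x54: "x \<ge> 5/4"
    proof (rule ccontr)
      assume "\<not> x \<ge> 5/4"
      hence "x ^ 3 < (5/4) ^ 3" using x1 by (intro power_strict_mono) auto
      thus False using x3 by (simp add: power_divide)
    qed
    have x2: "x ^ 2 \<le> 2"
    proof -
      have "x ^ 2 \<le> x ^ 3" using x1 by (intro power_increasing) auto
      thus ?thesis using x3 by simp
    qed
    have jle: "j \<le> J" if "j \<ge> 1" "i \<in> Gp j" for i j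
    proof -
      have "i \<in> R" using RGp that by auto
      hence "2 ^ (j - 1) * r < 2 ^ J * r" using grp_bounds[of i j] Gsub[OF that(1)] that sleM MJ by fastforce
      hence "(2::real) ^ (j - 1) < 2 ^ J" using r by simp
      hence "j - 1 < J" by (simp add: power_strict_increasing_iff)
      thus ?thesis by simp
    qed
    have Runion: "R = (\<Union>j\<in>{1..J}. Gp j)" using RGp jle by fastforce
    have disj: "Gp j \<inter> Gp j' = {}" if "j \<in> {1..J}" "j' \<in> {1..J}" "j \<noteq> j'" for j j'
    proof (rule ccontr)
      assume "Gp j \<inter> Gp j' \<noteq> {}"
      then obtain i where "i \<in> Gp j" "i \<in> Gp j'" by auto
      hence "2 ^ (j - 1) * r < 2 ^ j' * r" "2 ^ (j' - 1) * r < 2 ^ j * r"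
        using grp_bounds[of i j] grp_bounds[of i j'] Gsub that by fastforce+
      hence "(2::real) ^ (j - 1) < 2 ^ j'" "(2::real) ^ (j' - 1) < 2 ^ j" using r by simp_all
      hence "j - 1 < j'" "j' - 1 < j" by (simp_all add: power_strict_increasing_iff)
      thus False using that by auto
    qed
    have finG: "finite (Gp j)" if "j \<ge> 1" for j using Runion fin that jle
      by (metis Gsub Rsub finite_atLeastAtMost finite_subset grp_bounds subsetI)
    have elem: "root 3 (s i / S) \<le> 2 * m * 0 + x * x ^ j / x ^ J" if "j \<in> {1..J}" "i \<in> Gp j" for i j
    proof -
      have sb: "s i < 2 ^ j * r" using grp_bounds[of i j] Gsub that by fastforce
      have "s i / S \<le> s i / M" proof -
        have "i \<in> R" using that Runion by auto
        thus ?thesis using M MS spos by (intro divide_left_mono) auto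
      qed
      also have "\<dots> \<le> 2 ^ j * r / (2 ^ (J - 1) * r)"
        proof (rule frac_le)
        show "0 \<le> 2 ^ j * r" using r by simp
        show "s i \<le> 2 ^ j * r" using sb by simp
        show "0 < 2 ^ (J - 1) * r" using r by simp
        show "2 ^ (J - 1) * r \<le> M" using MJ(1) .
      qed
      also have "\<dots> = 2 * 2 ^ j / 2 ^ J"
      proof -
        have "(2::real) ^ J = 2 * 2 ^ (J - 1)" using \<open>J \<ge> 1\<close> by (cases J) simp_all
        thus ?thesis using r by (simp add: field_simps)
      qed
      finally have "root 3 (s i / S) \<le> root 3 (2 * 2 ^ j / 2 ^ J)" by simp
      also have "\<dots> = x * x ^ j / x ^ J" unfolding x_def
        by (simp add: real_root_mult real_root_divide real_root_power)
      finally show ?thesis by simp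
    qed
    have "(\<Sum>i\<in>R. root 3 (s i / S)) = (\<Sum>j\<in>{1..J}. \<Sum>i\<in>Gp j. root 3 (s i / S))"
      unfolding Runion using disj finG by (intro sum.UNION_disjoint) auto
    also have "\<dots> \<le> (\<Sum>j\<in>{1..J}. \<Sum>i\<in>Gp j. x * x ^ j / x ^ J)"
      using elem by (intro sum_mono) auto
    also have "\<dots> = (\<Sum>j\<in>{1..J}. card (Gp j) * (x * x ^ j / x ^ J))" by simp
    also have "\<dots> \<le> (\<Sum>j\<in>{1..J}. (2 * m) * (x * x ^ j / x ^ J))"
    proof (intro sum_mono mult_right_mono)
      fix j assume j: "j \<in> {1..J}"
      have "real (card (Gp j)) \<le> real (2 * m)" using Gcard j by (intro of_nat_mono) auto
      thus "real (card (Gp j)) \<le> real (2 * m)" by simp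
      show "0 \<le> x * x ^ j / x ^ J" using x1 by simp
    qed
    also have "\<dots> = (2 * m * x / x ^ J) * (\<Sum>j\<in>{1..J}. x ^ j)"
      by (simp add: sum_distrib_left sum_divide_distrib[symmetric] field_simps)
    also have "\<dots> \<le> (2 * m * x / x ^ J) * (x ^ (J+1) / (x - 1))"
      using geom_bound[OF x1] x1 by (intro mult_left_mono) auto
    also have "\<dots> = 2 * real m * (x ^ 2 / (x - 1))" using x1 by (simp add: field_simps power2_eq_square)
    also have "\<dots> \<le> 2 * real m * 8"
    proof (intro mult_left_mono)
      have "2 \<le> 8 * (x - 1)" using x54 by (simp add: algebra_simps)
      hence "x ^ 2 \<le> 8 * (x - 1)" using x2 by linarith
      thus "x ^ 2 / (x - 1) \<le> 8" using x1 by (simp add: divide_le_eq)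
    qed simp
    finally have Vb: "(\<Sum>i\<in>R. root 3 (s i / S)) \<le> 16 * m" by simp
    have Vpos: "(\<Sum>i\<in>R. root 3 (s i / S)) > 0" using fin ne spos S
      by (intro sum_pos) (auto simp: real_root_gt_zero)
    have "(2/3) * Ent s R \<le> ln (\<Sum>i\<in>R. root 3 (s i / S))"
      using renyi_bound[OF fin ne spos] by (simp add: S_def)
    also have "\<dots> \<le> ln (16 * m)" using Vb Vpos by simp
    also have "\<dots> = 4 * ln 2 + ln m" proof -
      have "ln (16::real) = ln (2 ^ 4)" by simp
      also have "\<dots> = 4 * ln 2" by (subst ln_realpow) auto
      finally show ?thesis using assms(2) by (simp add: ln_mult)
    qed
    finally have E: "(2/3) * Ent s R \<le> 4 * ln 2 + ln m" .
    have "ln (2::real) \<le> ln m" using assms(2) by simp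
    moreover have "Ent s R \<le> 6 * ln 2 + 3/2 * ln m" using E by (simp add: field_simps)
    moreover have "0 \<le> ln (real m)" using assms(2) by simp
    ultimately show ?thesis by linarith
  qed
qed

end
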